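(* Let $I\subset S$ be a proper nonzero monomial complete intersection ideal, i.e. its minimal monomial generators form a regular sequence. Then $I$ is $0$-clean.
   Context: $S=K[x_1,\dots,x_n]$, $K$ a field. For a monomial $u=x_1^{a_1}\cdots x_n^{a_n}$, $\mathrm{supp}(u)=\{i:a_i>0\}$. For an ideal $I$, $\min(I)$ is the set of minimal primes of $I$. A monomial $u\neq 1$ with $u\notin I$ is a cleaner monomial of $I$ if $\min(I+Su)\subseteq\min(I)$. For $k\ge 0$, the class of $k$-clean monomial ideals is defined recursively (smallest class closed under the rule): a proper monomial ideal $I$ is $k$-clean if either $I$ is prime, or $I$ has no embedded primes and there is a cleaner monomial $u$ of $I$ with $|\mathrm{supp}(u)|\le k+1$ such that $I:u$ and $I+Su$ are $k$-clean. *)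

theory Defs
  imports "HOL-Library.Poly_Mapping"
begin

(* Polynomial ring S = K[x_i : i in 'n] is modelled as finitely supported maps
   from exponent vectors to coefficients, 'n a finite type of variables, 'k a field. *)

type_synonym ('n, 'k) mpoly = "('n \<Rightarrow>\<^sub>0 nat) \<Rightarrow>\<^sub>0 'k"

definition is_ideal :: "'a::comm_ring_1 set \<Rightarrow> bool" where
  "is_ideal I \<longleftrightarrow> 0 \<in> I \<and> (\<forall>a\<in>I. \<forall>b\<in>I. a + b \<in> I) \<and> (\<forall>r. \<forall>a\<in>I. r * a \<in> I)"

definition gen_ideal :: "'a::comm_ring_1 set \<Rightarrow> 'a set" where
  "gen_ideal G = \<Inter>{J. is_ideal J \<and> G \<subseteq> J}"

definition ideal_sum :: "'a::comm_ring_1 set \<Rightarrow> 'a set \<Rightarrow> 'a set" where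
  "ideal_sum I J = {a + b | a b. a \<in> I \<and> b \<in> J}"

definition principal :: "'a::comm_ring_1 \<Rightarrow> 'a set" where
  "principal u = {s * u | s. True}"

definition colon :: "'a::comm_ring_1 set \<Rightarrow> 'a \<Rightarrow> 'a set" where
  "colon I u = {f. f * u \<in> I}"

definition prime_ideal :: "'a::comm_ring_1 set \<Rightarrow> bool" where
  "prime_ideal P \<longleftrightarrow> is_ideal P \<and> P \<noteq> UNIV \<and> (\<forall>a b. a * b \<in> P \<longrightarrow> a \<in> P \<or> b \<in> P)"

definition min_primes :: "'a::comm_ring_1 set \<Rightarrow> 'a set set" where
  "min_primes I = {P. prime_ideal P \<and> I \<subseteq> P \<and> (\<forall>Q. prime_ideal Q \<and> I \<subseteq> Q \<and> Q \<subseteq> P \<longrightarrow> Q = P)}"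

definition ass_primes :: "'a::comm_ring_1 set \<Rightarrow> 'a set set" where
  "ass_primes I = {P. prime_ideal P \<and> (\<exists>f. P = colon I f)}"

definition no_embedded_primes :: "'a::comm_ring_1 set \<Rightarrow> bool" where
  "no_embedded_primes I \<longleftrightarrow> ass_primes I \<subseteq> min_primes I"

definition regular_sequence :: "'a::comm_ring_1 list \<Rightarrow> bool" where
  "regular_sequence fs \<longleftrightarrow> gen_ideal (set fs) \<noteq> UNIV \<and>
     (\<forall>i < length fs. \<forall>g. g * fs ! i \<in> gen_ideal (set (take i fs))
        \<longrightarrow> g \<in> gen_ideal (set (take i fs)))"

definition monomials :: "('n, 'k::field) mpoly set" where
  "monomials = range (\<lambda>a. Poly_Mapping.single a 1)"

definition mon_supp :: "('n, 'k::field) mpoly \<Rightarrow> 'n set" where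
  "mon_supp u = (\<Union>a \<in> Poly_Mapping.keys u. Poly_Mapping.keys a)"

definition monomial_ideal :: "('n, 'k::field) mpoly set \<Rightarrow> bool" where
  "monomial_ideal I \<longleftrightarrow> (\<exists>G \<subseteq> monomials. I = gen_ideal G)"

definition min_mon_gens :: "('n, 'k::field) mpoly set \<Rightarrow> ('n, 'k) mpoly set" where
  "min_mon_gens I = {u \<in> I \<inter> monomials. \<forall>v \<in> I \<inter> monomials. v dvd u \<longrightarrow> v = u}"

definition complete_intersection :: "('n, 'k::field) mpoly set \<Rightarrow> bool" where
  "complete_intersection I \<longleftrightarrow>
     (\<exists>fs. distinct fs \<and> set fs = min_mon_gens I \<and> regular_sequence fs)"

definition cleaner_monomial :: "('n, 'k::field) mpoly set \<Rightarrow> ('n, 'k) mpoly \<Rightarrow> bool" where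
  "cleaner_monomial I u \<longleftrightarrow> u \<in> monomials \<and> u \<noteq> 1 \<and> u \<notin> I \<and>
     min_primes (ideal_sum I (principal u)) \<subseteq> min_primes I"

inductive k_clean :: "nat \<Rightarrow> ('n, 'k::field) mpoly set \<Rightarrow> bool" for k where
  prime: "monomial_ideal I \<Longrightarrow> I \<noteq> UNIV \<Longrightarrow> prime_ideal I \<Longrightarrow> k_clean k I"
| step: "monomial_ideal I \<Longrightarrow> I \<noteq> UNIV \<Longrightarrow> no_embedded_primes I \<Longrightarrow>
         cleaner_monomial I u \<Longrightarrow> card (mon_supp u) \<le> k + 1 \<Longrightarrow>
         k_clean k (colon I u) \<Longrightarrow> k_clean k (ideal_sum I (principal u)) \<Longrightarrow> k_clean k I"

end

theory Submission
  imports Defs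
begin


definition mon :: "('n \<Rightarrow>\<^sub>0 nat) \<Rightarrow> ('n, 'k::field) mpoly" where
  "mon a = Poly_Mapping.single a 1"

definition var :: "'n \<Rightarrow> ('n \<Rightarrow>\<^sub>0 nat)" where
  "var i = Poly_Mapping.single i 1"

definition dv :: "('n \<Rightarrow>\<^sub>0 nat) \<Rightarrow> ('n \<Rightarrow>\<^sub>0 nat) \<Rightarrow> bool" where
  "dv a b \<longleftrightarrow> (\<forall>i. Poly_Mapping.lookup a i \<le> Poly_Mapping.lookup b i)"

lemma poly_sum_singles:
  "(f::'a \<Rightarrow>\<^sub>0 'b::comm_monoid_add) = (\<Sum>a\<in>Poly_Mapping.keys f. Poly_Mapping.single a (Poly_Mapping.lookup f a))"
proof (rule poly_mapping_eqI)
  fix k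
  show "Poly_Mapping.lookup f k = Poly_Mapping.lookup (\<Sum>a\<in>Poly_Mapping.keys f. Poly_Mapping.single a (Poly_Mapping.lookup f a)) k"
    by (simp add: lookup_sum lookup_single when_def in_keys_iff)
qed

lemma lookup_mult_keys:
  fixes f g :: "('a::comm_monoid_add) \<Rightarrow>\<^sub>0 ('b::comm_semiring_0)"
  shows "Poly_Mapping.lookup (f * g) k = (\<Sum>a\<in>Poly_Mapping.keys f. \<Sum>b\<in>Poly_Mapping.keys g. if a + b = k then Poly_Mapping.lookup f a * Poly_Mapping.lookup g b else 0)"
proof -
  have "f * g = (\<Sum>a\<in>Poly_Mapping.keys f. Poly_Mapping.single a (Poly_Mapping.lookup f a)) * (\<Sum>b\<in>Poly_Mapping.keys g. Poly_Mapping.single b (Poly_Mapping.lookup g b))"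
    using poly_sum_singles[of f] poly_sum_singles[of g] by simp
  also have "\<dots> = (\<Sum>a\<in>Poly_Mapping.keys f. \<Sum>b\<in>Poly_Mapping.keys g. Poly_Mapping.single (a + b) (Poly_Mapping.lookup f a * Poly_Mapping.lookup g b))"
    by (simp add: sum_product mult_single)
  finally show ?thesis
    by (simp add: lookup_sum lookup_single when_def)
qed



lemma K4_gen:
  fixes f g :: "('a::comm_monoid_add) \<Rightarrow>\<^sub>0 ('b::{comm_semiring_0,semiring_no_zero_divisors})"
    and \<phi> :: "'a \<Rightarrow> 'c::linordered_cancel_ab_semigroup_add"
  assumes inj: "inj \<phi>" and add: "\<And>x y. \<phi> (x + y) = \<phi> x + \<phi> y"
    and f0: "f \<noteq> 0" and g0: "g \<noteq> 0"
  shows "\<exists>a\<in>Poly_Mapping.keys f. \<exists>b\<in>Poly_Mapping.keys g. a + b \<in> Poly_Mapping.keys (f * g)"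
proof -
  have F: "finite (Poly_Mapping.keys f)" "Poly_Mapping.keys f \<noteq> {}" using f0 by auto
  have G: "finite (Poly_Mapping.keys g)" "Poly_Mapping.keys g \<noteq> {}" using g0 by auto
  obtain a0 where a0: "a0 \<in> Poly_Mapping.keys f" "\<phi> a0 = Max (\<phi> ` Poly_Mapping.keys f)"
  proof -
    have "Max (\<phi> ` Poly_Mapping.keys f) \<in> \<phi> ` Poly_Mapping.keys f" using F by (intro Max_in) auto
    then show ?thesis using that by (metis imageE)
  qed
  obtain b0 where b0: "b0 \<in> Poly_Mapping.keys g" "\<phi> b0 = Max (\<phi> ` Poly_Mapping.keys g)"
  proof -
    have "Max (\<phi> ` Poly_Mapping.keys g) \<in> \<phi> ` Poly_Mapping.keys g" using G by (intro Max_in) auto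
    then show ?thesis using that by (metis imageE)
  qed
  have la: "\<phi> a \<le> \<phi> a0" if "a \<in> Poly_Mapping.keys f" for a using a0 F that by simp
  have lb: "\<phi> b \<le> \<phi> b0" if "b \<in> Poly_Mapping.keys g" for b using b0 G that by simp
  have uniq: "a = a0 \<and> b = b0" if "a \<in> Poly_Mapping.keys f" "b \<in> Poly_Mapping.keys g" "a + b = a0 + b0" for a b
  proof -
    have e: "\<phi> a + \<phi> b = \<phi> a0 + \<phi> b0" using that(3) add by metis
    have "\<phi> a = \<phi> a0"
    proof (rule ccontr)
      assume "\<phi> a \<noteq> \<phi> a0" then have "\<phi> a < \<phi> a0" using la[OF that(1)] by simp
      then have "\<phi> a + \<phi> b < \<phi> a0 + \<phi> b0" using lb[OF that(2)] by (rule add_less_le_mono)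
      then show False using e by simp
    qed
    moreover then have "\<phi> b = \<phi> b0" using e by simp
    ultimately show ?thesis using inj by (auto dest: injD)
  qed
  have inner: "(\<Sum>b\<in>Poly_Mapping.keys g. if a + b = a0 + b0 then Poly_Mapping.lookup f a * Poly_Mapping.lookup g b else 0)
      = (if a = a0 then Poly_Mapping.lookup f a0 * Poly_Mapping.lookup g b0 else 0)"
    if "a \<in> Poly_Mapping.keys f" for a
  proof (cases "a = a0")
    case True
    have "(\<Sum>b\<in>Poly_Mapping.keys g. if a + b = a0 + b0 then Poly_Mapping.lookup f a * Poly_Mapping.lookup g b else 0)
      = (\<Sum>b\<in>Poly_Mapping.keys g. if b = b0 then Poly_Mapping.lookup f a * Poly_Mapping.lookup g b else 0)"
      by (rule sum.cong) (use uniq[OF that] True in auto)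
    then show ?thesis using b0(1) G(1) True by simp
  next
    case False
    have "\<forall>b\<in>Poly_Mapping.keys g. (if a + b = a0 + b0 then Poly_Mapping.lookup f a * Poly_Mapping.lookup g b else 0) = 0"
      using uniq[OF that] False by auto
    then show ?thesis using False by (simp add: sum.neutral)
  qed
  have "Poly_Mapping.lookup (f * g) (a0 + b0) = Poly_Mapping.lookup f a0 * Poly_Mapping.lookup g b0"
    unfolding lookup_mult_keys using a0(1) F(1) by (simp add: inner cong: sum.cong)
  also have "\<dots> \<noteq> 0" using a0(1) b0(1) by (simp add: in_keys_iff)
  finally have "a0 + b0 \<in> Poly_Mapping.keys (f * g)" by (simp add: in_keys_iff)
  then show ?thesis using a0(1) b0(1) by blast
qed



lemma K4:
  fixes f g :: "('n::finite \<Rightarrow>\<^sub>0 nat) \<Rightarrow>\<^sub>0 'k::field"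
  assumes "f \<noteq> 0" "g \<noteq> 0"
  shows "\<exists>a\<in>Poly_Mapping.keys f. \<exists>b\<in>Poly_Mapping.keys g. a + b \<in> Poly_Mapping.keys (f * g)"
proof -
  obtain h :: "'n \<Rightarrow> nat" and n where "h ` UNIV = {i. i < n}" "inj_on h UNIV"
    using finite_imp_inj_to_nat_seg[of "UNIV :: 'n set"] by auto
  then have inj: "inj h" by simp
  define \<phi> :: "('n \<Rightarrow>\<^sub>0 nat) \<Rightarrow> (nat \<Rightarrow>\<^sub>0 nat)" where
    "\<phi> b = Abs_poly_mapping (\<lambda>k. if k \<in> range h then Poly_Mapping.lookup b (inv h k) else 0)" for b
  have fin: "finite {k. (if k \<in> range h then Poly_Mapping.lookup b (inv h k) else 0) \<noteq> 0}" for b :: "'n \<Rightarrow>\<^sub>0 nat"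
    by (rule finite_subset[of _ "range h"]) auto
  have lk: "Poly_Mapping.lookup (\<phi> b) k = (if k \<in> range h then Poly_Mapping.lookup b (inv h k) else 0)" for b k
    unfolding \<phi>_def using fin[of b] by simp
  have lkh: "Poly_Mapping.lookup (\<phi> b) (h i) = Poly_Mapping.lookup b i" for b i
    using lk inj by simp
  have "inj \<phi>"
  proof (rule injI)
    fix x y assume "\<phi> x = \<phi> y"
    then have "Poly_Mapping.lookup x i = Poly_Mapping.lookup y i" for i using lkh by metis
    then show "x = y" by (rule poly_mapping_eqI)
  qed
  moreover have "\<phi> (x + y) = \<phi> x + \<phi> y" for x y
    by (rule poly_mapping_eqI) (simp add: lk lookup_add)
  ultimately show ?thesis using K4_gen[of \<phi> f g] assms by blast
qed

lemma ideal_add: "is_ideal I \<Longrightarrow> a \<in> I \<Longrightarrow> b \<in> I \<Longrightarrow> a + b \<in> I"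
  unfolding is_ideal_def by blast
lemma ideal_mult: "is_ideal I \<Longrightarrow> a \<in> I \<Longrightarrow> r * a \<in> I"
  unfolding is_ideal_def by blast
lemma ideal_mult2: "is_ideal I \<Longrightarrow> a \<in> I \<Longrightarrow> a * r \<in> I"
  unfolding is_ideal_def by (metis mult.commute)
lemma ideal_0: "is_ideal I \<Longrightarrow> 0 \<in> I"
  unfolding is_ideal_def by blast
lemma ideal_uminus: "is_ideal I \<Longrightarrow> a \<in> I \<Longrightarrow> - a \<in> I"
  using ideal_mult[of I a "-1"] by simp
lemma ideal_diff: "is_ideal I \<Longrightarrow> a \<in> I \<Longrightarrow> b \<in> I \<Longrightarrow> a - b \<in> I"
  using ideal_add[of I a "-b"] ideal_uminus[of I b] by simp
lemma ideal_sum: "is_ideal I \<Longrightarrow> (\<And>x. x \<in> X \<Longrightarrow> f x \<in> I) \<Longrightarrow> sum f X \<in> I"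
  by (induction X rule: infinite_finite_induct) (auto simp: ideal_0 ideal_add)
lemma ideal_one: "is_ideal I \<Longrightarrow> 1 \<in> I \<Longrightarrow> I = UNIV"
  using ideal_mult[of I 1] by auto

lemma gen_ideal_ideal: "is_ideal (gen_ideal G)"
  unfolding gen_ideal_def is_ideal_def by blast
lemma gen_ideal_sub: "G \<subseteq> gen_ideal G"
  unfolding gen_ideal_def by blast
lemma gen_ideal_least: "is_ideal J \<Longrightarrow> G \<subseteq> J \<Longrightarrow> gen_ideal G \<subseteq> J"
  unfolding gen_ideal_def by blast

lemma ideal_sum_ideal: "is_ideal I \<Longrightarrow> is_ideal J \<Longrightarrow> is_ideal (ideal_sum I J)"
  unfolding is_ideal_def ideal_sum_def
proof (intro conjI ballI allI)
  assume a: "(0 \<in> I \<and> (\<forall>a\<in>I. \<forall>b\<in>I. a + b \<in> I) \<and> (\<forall>r. \<forall>a\<in>I. r * a \<in> I))"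
     "(0 \<in> J \<and> (\<forall>a\<in>J. \<forall>b\<in>J. a + b \<in> J) \<and> (\<forall>r. \<forall>a\<in>J. r * a \<in> J))"
  show "0 \<in> {a + b |a b. a \<in> I \<and> b \<in> J}" using a by force
  fix x y assume "x \<in> {a + b |a b. a \<in> I \<and> b \<in> J}" "y \<in> {a + b |a b. a \<in> I \<and> b \<in> J}"
  then obtain a1 b1 a2 b2 where "x = a1 + b1" "y = a2 + b2" "a1 \<in> I" "a2 \<in> I" "b1 \<in> J" "b2 \<in> J" by blast
  then show "x + y \<in> {a + b |a b. a \<in> I \<and> b \<in> J}" using a
    by (intro CollectI exI[of _ "a1 + a2"] exI[of _ "b1 + b2"]) (simp add: algebra_simps)
next
  fix r x
  assume a: "(0 \<in> I \<and> (\<forall>a\<in>I. \<forall>b\<in>I. a + b \<in> I) \<and> (\<forall>r. \<forall>a\<in>I. r * a \<in> I))"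
     "(0 \<in> J \<and> (\<forall>a\<in>J. \<forall>b\<in>J. a + b \<in> J) \<and> (\<forall>r. \<forall>a\<in>J. r * a \<in> J))"
    and "x \<in> {a + b |a b. a \<in> I \<and> b \<in> J}"
  then obtain a1 b1 where "x = a1 + b1" "a1 \<in> I" "b1 \<in> J" by blast
  moreover have "r * x = r * a1 + r * b1" using \<open>x = a1 + b1\<close> by (simp add: algebra_simps)
  ultimately show "r * x \<in> {a + b |a b. a \<in> I \<and> b \<in> J}" using a by blast
qed

lemma principal_ideal: "is_ideal (principal u)"
  unfolding is_ideal_def principal_def
proof (intro conjI ballI allI)
  show "0 \<in> {s * u |s. True}" by (intro CollectI exI[of _ 0]) simp
  fix x y assume "x \<in> {s * u |s. True}" "y \<in> {s * u |s. True}"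
  then obtain s t where "x = s * u" "y = t * u" by blast
  then show "x + y \<in> {s * u |s. True}" by (intro CollectI exI[of _ "s + t"]) (simp add: algebra_simps)
next
  fix r x assume "x \<in> {s * u |s. True}"
  then obtain s where "x = s * u" by blast
  then show "r * x \<in> {s * u |s. True}" by (intro CollectI exI[of _ "r * s"]) (simp add: algebra_simps)
qed

lemma ideal_sum_gen: "ideal_sum (gen_ideal G) (principal u) = gen_ideal (insert u G)"
proof
  have "u \<in> gen_ideal (insert u G)" using gen_ideal_sub by blast
  then have pu: "principal u \<subseteq> gen_ideal (insert u G)"
    unfolding principal_def using ideal_mult[OF gen_ideal_ideal] by blast
  have "gen_ideal G \<subseteq> gen_ideal (insert u G)"
    by (rule gen_ideal_least[OF gen_ideal_ideal]) (use gen_ideal_sub in blast)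
  then show "ideal_sum (gen_ideal G) (principal u) \<subseteq> gen_ideal (insert u G)"
    unfolding ideal_sum_def using pu ideal_add[OF gen_ideal_ideal] by blast
next
  have i: "is_ideal (ideal_sum (gen_ideal G) (principal u))"
    by (rule ideal_sum_ideal[OF gen_ideal_ideal principal_ideal])
  have "u \<in> ideal_sum (gen_ideal G) (principal u)"
    unfolding ideal_sum_def principal_def using ideal_0[OF gen_ideal_ideal, of G]
    by (metis (mono_tags, lifting) add_0 mem_Collect_eq mult_1)
  moreover have "G \<subseteq> ideal_sum (gen_ideal G) (principal u)"
  proof
    fix x assume "x \<in> G"
    then have "x \<in> gen_ideal G" using gen_ideal_sub by blast
    moreover have "x = x + 0 * u" by simp
    ultimately show "x \<in> ideal_sum (gen_ideal G) (principal u)"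
      unfolding ideal_sum_def principal_def by blast
  qed
  ultimately show "gen_ideal (insert u G) \<subseteq> ideal_sum (gen_ideal G) (principal u)"
    by (intro gen_ideal_least[OF i]) auto
qed



definition MS :: "('n::finite \<Rightarrow>\<^sub>0 nat) set \<Rightarrow> ('n, 'k::field) mpoly set" where
  "MS D = {f. Poly_Mapping.keys f \<subseteq> D}"
definition upc :: "('n \<Rightarrow>\<^sub>0 nat) set \<Rightarrow> bool" where
  "upc D \<longleftrightarrow> (\<forall>b c. b \<in> D \<longrightarrow> b + c \<in> D)"
definition up :: "('n \<Rightarrow>\<^sub>0 nat) set \<Rightarrow> ('n \<Rightarrow>\<^sub>0 nat) set" where
  "up A = {b. \<exists>a\<in>A. dv a b}"
definition MI :: "('n::finite \<Rightarrow>\<^sub>0 nat) set \<Rightarrow> ('n, 'k::field) mpoly set" where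
  "MI A = MS (up A)"
definition proj :: "('n \<Rightarrow>\<^sub>0 nat) set \<Rightarrow> ('n, 'k::field) mpoly \<Rightarrow> ('n, 'k) mpoly" where
  "proj D f = Abs_poly_mapping (\<lambda>b. if b \<in> D then Poly_Mapping.lookup f b else 0)"

lemma lookup_proj: "Poly_Mapping.lookup (proj D f) b = (if b \<in> D then Poly_Mapping.lookup f b else 0)"
proof -
  have "finite {b. (if b \<in> D then Poly_Mapping.lookup f b else 0) \<noteq> 0}"
    by (rule finite_subset[of _ "Poly_Mapping.keys f"]) (auto simp: in_keys_iff)
  then show ?thesis unfolding proj_def by simp
qed

lemma keys_proj: "Poly_Mapping.keys (proj D f) = Poly_Mapping.keys f \<inter> D"
  by (auto simp: in_keys_iff lookup_proj split: if_splits)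

lemma proj_split: "f = proj D f + proj (- D) f"
  by (rule poly_mapping_eqI) (simp add: lookup_add lookup_proj)

lemma MS_ideal: "upc D \<Longrightarrow> is_ideal (MS D)"
  unfolding is_ideal_def MS_def
proof (intro conjI ballI allI)
  assume u: "upc D"
  show "0 \<in> {f. Poly_Mapping.keys f \<subseteq> D}" by simp
  fix a b :: "('a, 'b) mpoly" assume "a \<in> {f. Poly_Mapping.keys f \<subseteq> D}" "b \<in> {f. Poly_Mapping.keys f \<subseteq> D}"
  then show "a + b \<in> {f. Poly_Mapping.keys f \<subseteq> D}" using keys_add[of a b] by auto
next
  fix r a :: "('a, 'b) mpoly"
  assume u: "upc D" and "a \<in> {f. Poly_Mapping.keys f \<subseteq> D}"
  have "Poly_Mapping.keys (r * a) \<subseteq> D"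
  proof
    fix x assume "x \<in> Poly_Mapping.keys (r * a)"
    then obtain p q where "x = p + q" "q \<in> Poly_Mapping.keys a" using keys_mult[of r a] by blast
    then show "x \<in> D" using u \<open>a \<in> _\<close> unfolding upc_def by (metis add.commute mem_Collect_eq subsetD)
  qed
  then show "r * a \<in> {f. Poly_Mapping.keys f \<subseteq> D}" by simp
qed

lemma dv_refl[simp]: "dv a a" by (simp add: dv_def)
lemma dv_trans: "dv a b \<Longrightarrow> dv b c \<Longrightarrow> dv a c" unfolding dv_def using le_trans by blast
lemma dv_add: "dv a b \<Longrightarrow> dv a (b + c)" by (simp add: dv_def lookup_add trans_le_add1)
lemma dv_add2: "dv a b \<Longrightarrow> dv a (c + b)" by (simp add: dv_def lookup_add trans_le_add2)
lemma dv_decomp: "dv a b \<Longrightarrow> b = (b - a) + a"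
  by (rule poly_mapping_eqI) (simp add: dv_def lookup_add lookup_minus)

lemma upc_up: "upc (up A)" unfolding upc_def up_def using dv_add by blast

lemma MI_ideal: "is_ideal (MI A)" unfolding MI_def by (rule MS_ideal[OF upc_up])

lemma keys_mon[simp]: "Poly_Mapping.keys (mon a :: ('n, 'k::field) mpoly) = {a}"
  by (simp add: mon_def)
lemma lookup_mon_same[simp]: "Poly_Mapping.lookup (mon a :: ('n, 'k::field) mpoly) a = 1"
  by (simp add: mon_def)

lemma mon_MS: "(mon a :: ('n::finite, 'k::field) mpoly) \<in> MS D \<longleftrightarrow> a \<in> D"
  by (simp add: MS_def)

lemma mon_mult: "(mon a :: ('n, 'k::field) mpoly) * mon b = mon (a + b)"
  by (simp add: mon_def mult_single)

lemma mon_one: "(mon 0 :: ('n, 'k::field) mpoly) = 1"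
  by (simp add: mon_def)

lemma mon_inj: "(mon a :: ('n, 'k::field) mpoly) = mon b \<longleftrightarrow> a = b"
  unfolding mon_def by (metis keys_mon mon_def singleton_inject)

lemma gen_ideal_MI: "gen_ideal (mon ` A :: ('n::finite, 'k::field) mpoly set) = MI A"
proof
  show "gen_ideal (mon ` A) \<subseteq> (MI A :: ('n, 'k) mpoly set)"
    by (rule gen_ideal_least[OF MI_ideal]) (auto simp: MI_def mon_MS up_def; metis dv_refl)
next
  show "(MI A :: ('n, 'k) mpoly set) \<subseteq> gen_ideal (mon ` A)"
  proof
    fix f :: "('n, 'k) mpoly" assume f: "f \<in> MI A"
    have "(\<Sum>b\<in>Poly_Mapping.keys f. Poly_Mapping.single b (Poly_Mapping.lookup f b)) \<in> gen_ideal (mon ` A)"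
    proof (rule ideal_sum[OF gen_ideal_ideal])
      fix b assume b: "b \<in> Poly_Mapping.keys f"
      then obtain a where a: "a \<in> A" "dv a b" using f by (auto simp: MI_def MS_def up_def)
      have "Poly_Mapping.single b (Poly_Mapping.lookup f b) = Poly_Mapping.single (b - a) (Poly_Mapping.lookup f b) * mon a"
        using dv_decomp[OF a(2)] by (simp add: mon_def mult_single)
      moreover have "mon a \<in> gen_ideal (mon ` A)" using a gen_ideal_sub by blast
      ultimately show "Poly_Mapping.single b (Poly_Mapping.lookup f b) \<in> gen_ideal (mon ` A)"
        using ideal_mult[OF gen_ideal_ideal] by metis
    qed
    then show "f \<in> gen_ideal (mon ` A)" using poly_sum_singles[of f] by simp
  qed
qed

lemma lookup_mult_mon: "Poly_Mapping.lookup (f * mon c :: ('n, 'k::field) mpoly) k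
   = (\<Sum>a\<in>Poly_Mapping.keys f. if a + c = k then Poly_Mapping.lookup f a else 0)"
  unfolding lookup_mult_keys by (rule sum.cong[OF refl]) (simp add: mon_def)

lemma lookup_mult_mon_shift: "Poly_Mapping.lookup (f * mon c :: ('n, 'k::field) mpoly) (b + c) = Poly_Mapping.lookup f b"
proof -
  have "(\<Sum>a\<in>Poly_Mapping.keys f. if a + c = b + c then Poly_Mapping.lookup f a else 0)
       = (\<Sum>a\<in>Poly_Mapping.keys f. if a = b then Poly_Mapping.lookup f a else 0)"
    by (rule sum.cong) auto
  then show ?thesis by (simp add: lookup_mult_mon in_keys_iff)
qed

lemma keys_mult_mon: "Poly_Mapping.keys (f * mon c :: ('n, 'k::field) mpoly) = (\<lambda>b. b + c) ` Poly_Mapping.keys f"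
proof
  show "(\<lambda>b. b + c) ` Poly_Mapping.keys f \<subseteq> Poly_Mapping.keys (f * mon c)"
    by (auto simp: in_keys_iff lookup_mult_mon_shift)
  show "Poly_Mapping.keys (f * mon c) \<subseteq> (\<lambda>b. b + c) ` Poly_Mapping.keys f"
    using keys_mult[of f "mon c"] by auto
qed

lemma prime_MS:
  assumes u: "upc D" and c: "\<And>b c. b \<notin> D \<Longrightarrow> c \<notin> D \<Longrightarrow> b + c \<notin> D" and z: "0 \<notin> D"
  shows "prime_ideal (MS D :: ('n::finite, 'k::field) mpoly set)"
  unfolding prime_ideal_def
proof (intro conjI allI impI)
  show I: "is_ideal (MS D :: ('n, 'k) mpoly set)" by (rule MS_ideal[OF u])
  show "(MS D :: ('n, 'k) mpoly set) \<noteq> UNIV"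
  proof
    assume "(MS D :: ('n, 'k) mpoly set) = UNIV"
    then have "(1 :: ('n, 'k) mpoly) \<in> MS D" by simp
    then show False using z by (simp add: MS_def)
  qed
  fix a b :: "('n, 'k) mpoly" assume ab: "a * b \<in> MS D"
  show "a \<in> MS D \<or> b \<in> MS D"
  proof (rule ccontr)
    assume "\<not> (a \<in> MS D \<or> b \<in> MS D)"
    then have na: "a \<notin> MS D" and nb: "b \<notin> MS D" by auto
    define a' where "a' = proj (- D) a"
    define b' where "b' = proj (- D) b"
    have ka: "Poly_Mapping.keys a' = Poly_Mapping.keys a - D" unfolding a'_def keys_proj by blast
    have kb: "Poly_Mapping.keys b' = Poly_Mapping.keys b - D" unfolding b'_def keys_proj by blast
    have "a' \<noteq> 0" using na ka by (auto simp: MS_def)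
    moreover have "b' \<noteq> 0" using nb kb by (auto simp: MS_def)
    ultimately obtain x y where xy: "x \<in> Poly_Mapping.keys a'" "y \<in> Poly_Mapping.keys b'" "x + y \<in> Poly_Mapping.keys (a' * b')"
      using K4 by blast
    have pa: "proj D a \<in> MS D" by (simp add: MS_def keys_proj)
    have pb: "proj D b \<in> MS D" by (simp add: MS_def keys_proj)
    have "a * b = a' * b' + (proj D a * b + a' * proj D b)"
      using proj_split[of a D] proj_split[of b D] unfolding a'_def b'_def
      by (simp add: algebra_simps) (metis add.commute distrib_right mult.commute)
    then have "a' * b' = a * b - (proj D a * b + a' * proj D b)" by simp
    also have "\<dots> \<in> MS D"
    proof -
      have "proj D a * b \<in> MS D" by (rule ideal_mult2[OF I pa])
      moreover have "a' * proj D b \<in> MS D" by (rule ideal_mult[OF I pb])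
      ultimately show ?thesis using I ab by (intro ideal_diff ideal_add) auto
    qed
    finally have "x + y \<in> D" using xy(3) by (auto simp: MS_def)
    then show False using c xy(1,2) ka kb by auto
  qed
qed



definition deg :: "('n::finite \<Rightarrow>\<^sub>0 nat) \<Rightarrow> nat" where
  "deg a = (\<Sum>i\<in>UNIV. Poly_Mapping.lookup a i)"

definition Q :: "'n::finite set \<Rightarrow> ('n, 'k::field) mpoly set" where
  "Q V = MI (var ` V)"

definition trans :: "('n \<Rightarrow>\<^sub>0 nat) set \<Rightarrow> 'n set \<Rightarrow> bool" where
  "trans A V \<longleftrightarrow> V \<subseteq> (\<Union>a\<in>A. Poly_Mapping.keys a) \<and> (\<forall>a\<in>A. \<exists>i. V \<inter> Poly_Mapping.keys a = {i})"

definition disj :: "('n \<Rightarrow>\<^sub>0 nat) set \<Rightarrow> bool" where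
  "disj A \<longleftrightarrow> (\<forall>a\<in>A. \<forall>b\<in>A. a \<noteq> b \<longrightarrow> Poly_Mapping.keys a \<inter> Poly_Mapping.keys b = {})"

lemma lookup_var: "Poly_Mapping.lookup (var i) j = (if i = j then 1 else 0)"
  by (simp add: var_def lookup_single)
lemma keys_var[simp]: "Poly_Mapping.keys (var i) = {i}"
  by (simp add: var_def)
lemma var_nz[simp]: "var i \<noteq> 0"
  using keys_var[of i] by (metis empty_not_insert keys_zero)
lemma var_inj: "var i = var j \<longleftrightarrow> i = j"
  by (metis keys_var singleton_inject)

lemma deg_add: "deg (a + b) = deg a + deg b"
  by (simp add: deg_def lookup_add sum.distrib)
lemma deg_var[simp]: "deg (var i) = 1"
  by (simp add: deg_def lookup_var)
lemma deg_zero_iff: "deg a = 0 \<longleftrightarrow> a = 0"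
proof
  assume "deg a = 0"
  then have "Poly_Mapping.lookup a i = 0" for i by (simp add: deg_def)
  then show "a = 0" by (intro poly_mapping_eqI) simp
qed (simp add: deg_def)

lemma dv_var: "dv (var i) b \<longleftrightarrow> Poly_Mapping.lookup b i \<noteq> 0"
  by (auto simp: dv_def lookup_var)

lemma up_var: "up (var ` V) = {b. \<exists>i\<in>V. Poly_Mapping.lookup b i \<noteq> 0}"
  by (auto simp: up_def dv_var)

lemma prime_Q: "prime_ideal (Q V :: ('n::finite, 'k::field) mpoly set)"
  unfolding Q_def MI_def
  by (rule prime_MS[OF upc_up]) (auto simp: up_var lookup_add)

lemma mon_MI: "(mon a :: ('n::finite, 'k::field) mpoly) \<in> MI A \<longleftrightarrow> a \<in> up A"
  by (simp add: MI_def mon_MS)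

lemma mon_var_Q: "(mon (var j) :: ('n::finite, 'k::field) mpoly) \<in> Q V \<longleftrightarrow> j \<in> V"
  by (auto simp: Q_def mon_MI up_var lookup_var split: if_splits)

lemma MI_sub: "is_ideal P \<Longrightarrow> (\<And>a. a \<in> A \<Longrightarrow> mon a \<in> P) \<Longrightarrow> (MI A :: ('n::finite, 'k::field) mpoly set) \<subseteq> P"
  using gen_ideal_least[of P "mon ` A"] gen_ideal_MI[of A] by auto

lemma Q_sub: "is_ideal P \<Longrightarrow> (\<And>i. i \<in> V \<Longrightarrow> mon (var i) \<in> P) \<Longrightarrow> (Q V :: ('n::finite, 'k::field) mpoly set) \<subseteq> P"
  unfolding Q_def by (rule MI_sub) auto

lemma prime_ideal_is: "prime_ideal P \<Longrightarrow> is_ideal P" by (simp add: prime_ideal_def)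

lemma prime_var:
  assumes P: "prime_ideal (P :: ('n::finite, 'k::field) mpoly set)"
  shows "mon a \<in> P \<Longrightarrow> \<exists>i. Poly_Mapping.lookup a i \<noteq> 0 \<and> mon (var i) \<in> P"
proof (induction "deg a" arbitrary: a rule: less_induct)
  case less
  show ?case
  proof (cases "a = 0")
    case True
    then have "(1 :: ('n, 'k) mpoly) \<in> P" using less.prems by (simp add: mon_one)
    then have "P = UNIV" using ideal_one P by (auto simp: prime_ideal_def)
    then show ?thesis using P by (simp add: prime_ideal_def)
  next
    case False
    then obtain i where i: "Poly_Mapping.lookup a i \<noteq> 0" by (metis poly_mapping_eqI lookup_zero)
    then have "dv (var i) a" by (simp add: dv_var)
    then have ad: "a = (a - var i) + var i" by (rule dv_decomp)
    then have "mon a = mon (a - var i) * (mon (var i) :: ('n, 'k) mpoly)" by (metis mon_mult)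
    then have "mon (a - var i) \<in> P \<or> (mon (var i) :: ('n, 'k) mpoly) \<in> P"
      using P less.prems unfolding prime_ideal_def by metis
    then show ?thesis
    proof
      assume m: "mon (a - var i) \<in> P"
      have "deg a = deg (a - var i) + 1" using ad deg_add by (metis deg_var)
      then obtain j where "Poly_Mapping.lookup (a - var i) j \<noteq> 0" "mon (var j) \<in> P"
        using less.hyps[of "a - var i"] m by auto
      then have "Poly_Mapping.lookup a j \<noteq> 0" by (simp add: lookup_minus)
      then show ?thesis using \<open>mon (var j) \<in> P\<close> by blast
    qed (use i in auto)
  qed
qed

lemma mon_in_MI: "a \<in> A \<Longrightarrow> (mon a :: ('n::finite, 'k::field) mpoly) \<in> MI A"
  unfolding mon_MI up_def using dv_refl by blast

lemma MI_not_UNIV: "0 \<notin> A \<Longrightarrow> (MI A :: ('n::finite, 'k::field) mpoly set) \<noteq> UNIV"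
proof
  assume "0 \<notin> A" "(MI A :: ('n, 'k) mpoly set) = UNIV"
  then have "(mon 0 :: ('n, 'k) mpoly) \<in> MI A" by simp
  then obtain a where "a \<in> A" "dv a 0" by (auto simp: mon_MI up_def)
  then have "a = 0" by (intro poly_mapping_eqI) (simp add: dv_def)
  then show False using \<open>0 \<notin> A\<close> \<open>a \<in> A\<close> by simp
qed

lemma prime_MI_vars: "A \<subseteq> range var \<Longrightarrow> prime_ideal (MI A :: ('n::finite, 'k::field) mpoly set)"
proof -
  assume "A \<subseteq> range var"
  then have "A = var ` {i. var i \<in> A}" by auto
  then show ?thesis using prime_Q unfolding Q_def by metis
qed

lemma min_Q:
  assumes t: "trans A V"
  shows "(Q V :: ('n::finite, 'k::field) mpoly set) \<in> min_primes (MI A)"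
  unfolding min_primes_def
proof (intro CollectI conjI allI impI)
  show "prime_ideal (Q V :: ('n, 'k) mpoly set)" by (rule prime_Q)
  show "(MI A :: ('n, 'k) mpoly set) \<subseteq> Q V"
  proof (rule MI_sub[OF prime_ideal_is[OF prime_Q]])
    fix a assume "a \<in> A"
    then obtain i where "V \<inter> Poly_Mapping.keys a = {i}" using t by (auto simp: trans_def)
    then have "i \<in> V" "Poly_Mapping.lookup a i \<noteq> 0" by (auto simp: in_keys_iff)
    then show "mon a \<in> (Q V :: ('n, 'k) mpoly set)"
      unfolding Q_def mon_MI up_var by blast
  qed
  fix P :: "('n, 'k) mpoly set"
  assume P: "prime_ideal P \<and> MI A \<subseteq> P \<and> P \<subseteq> Q V"
  show "P = Q V"
  proof
    show "P \<subseteq> Q V" using P by blast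
    show "Q V \<subseteq> P"
    proof (rule Q_sub[OF prime_ideal_is])
      show "prime_ideal P" using P by blast
      fix j assume j: "j \<in> V"
      then obtain a where a: "a \<in> A" "j \<in> Poly_Mapping.keys a" using t by (auto simp: trans_def)
      then obtain k where k: "V \<inter> Poly_Mapping.keys a = {k}" using t by (auto simp: trans_def)
      have "mon a \<in> P" using mon_in_MI[OF a(1)] P by blast
      then obtain i where i: "Poly_Mapping.lookup a i \<noteq> 0" "mon (var i) \<in> P"
        using prime_var P by blast
      then have "i \<in> V" using P mon_var_Q by blast
      then have "i \<in> V \<inter> Poly_Mapping.keys a" using i(1) by (simp add: in_keys_iff)
      then have "i = j" using j a(2) k by (metis IntI singletonD)
      then show "mon (var j) \<in> P" using i by simp
    qed
  qed
qed

lemma min_char: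
  assumes d: "disj A" and P: "P \<in> min_primes (MI A :: ('n::finite, 'k::field) mpoly set)"
  shows "\<exists>V. trans A V \<and> P = Q V"
proof -
  have Pp: "prime_ideal P" and PI: "MI A \<subseteq> P" using P by (auto simp: min_primes_def)
  have ex: "\<exists>i. i \<in> Poly_Mapping.keys a \<and> mon (var i) \<in> P" if "a \<in> A" for a
  proof -
    have "mon a \<in> P" using mon_in_MI[OF that] PI by blast
    then show ?thesis using prime_var[OF Pp] by (auto simp: in_keys_iff)
  qed
  define s :: "('n \<Rightarrow>\<^sub>0 nat) \<Rightarrow> 'n" where "s a = (SOME i. i \<in> Poly_Mapping.keys a \<and> mon (var i) \<in> P)" for a
  have s: "s a \<in> Poly_Mapping.keys a \<and> mon (var (s a)) \<in> P" if "a \<in> A" for a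
    unfolding s_def by (rule someI_ex[OF ex[OF that]])
  define V where "V = s ` A"
  have t: "trans A V"
    unfolding trans_def
  proof (intro conjI ballI)
    show "V \<subseteq> (\<Union>a\<in>A. Poly_Mapping.keys a)" using s unfolding V_def by blast
    fix a assume a: "a \<in> A"
    have "V \<inter> Poly_Mapping.keys a = {s a}"
    proof (rule set_eqI, rule iffI)
      fix x assume "x \<in> V \<inter> Poly_Mapping.keys a"
      then obtain b where b: "b \<in> A" "x = s b" "x \<in> Poly_Mapping.keys a" unfolding V_def by blast
      then have "a = b" using d a s[OF b(1)] unfolding disj_def by blast
      then show "x \<in> {s a}" using b by simp
    qed (use a s V_def in auto)
    then show "\<exists>i. V \<inter> Poly_Mapping.keys a = {i}" by blast
  qed
  have "Q V \<subseteq> P" by (rule Q_sub[OF prime_ideal_is[OF Pp]]) (use s V_def in auto)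
  moreover have "Q V \<in> min_primes (MI A)" by (rule min_Q[OF t])
  ultimately have "P = Q V" using P unfolding min_primes_def by blast
  then show ?thesis using t by blast
qed



definition CIset :: "('n::finite \<Rightarrow>\<^sub>0 nat) set \<Rightarrow> bool" where
  "CIset A \<longleftrightarrow> finite A \<and> A \<noteq> {} \<and> 0 \<notin> A \<and> disj A"

lemma disjD: "disj A \<Longrightarrow> a \<in> A \<Longrightarrow> b \<in> A \<Longrightarrow> i \<in> Poly_Mapping.keys a \<Longrightarrow> i \<in> Poly_Mapping.keys b \<Longrightarrow> a = b"
  unfolding disj_def by blast

lemma no_emb:
  assumes dA: "disj A"
  shows "no_embedded_primes (MI A :: ('n::finite, 'k::field) mpoly set)"
  unfolding no_embedded_primes_def
proof
  fix P :: "('n, 'k) mpoly set"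
  assume "P \<in> ass_primes (MI A)"
  then obtain f where Pp: "prime_ideal P" and Pf: "P = colon (MI A) f"
    unfolding ass_primes_def by blast
  define D where "D = up A"
  have ID: "MI A = (MS D :: ('n, 'k) mpoly set)" by (simp add: MI_def D_def)
  have Iid: "is_ideal (MI A :: ('n, 'k) mpoly set)" by (rule MI_ideal)
  define f' where "f' = proj (- D) f"
  have pf: "proj D f \<in> MI A" by (simp add: ID MS_def keys_proj)
  have colon_eq: "g \<in> P \<longleftrightarrow> g * f' \<in> MI A" for g
  proof -
    have e: "g * f = g * f' + g * proj D f" using proj_split[of f D]
      unfolding f'_def by (metis add.commute distrib_left)
    have "g * proj D f \<in> MI A" by (rule ideal_mult[OF Iid pf])
    then have "g * f \<in> MI A \<longleftrightarrow> g * f' \<in> MI A"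
      using e ideal_add[OF Iid] ideal_diff[OF Iid] by (metis add_diff_cancel_right')
    then show ?thesis using Pf by (simp add: colon_def)
  qed
  have kf: "Poly_Mapping.keys f' \<inter> D = {}" unfolding f'_def keys_proj by blast
  have f'0: "f' \<noteq> 0"
  proof
    assume "f' = 0"
    then have "P = UNIV" using colon_eq ideal_0[OF Iid] by auto
    then show False using Pp by (simp add: prime_ideal_def)
  qed
  then obtain b0 where b0: "b0 \<in> Poly_Mapping.keys f'" by (metis all_not_in_conv keys_eq_empty)
  have IP: "MI A \<subseteq> P" using colon_eq ideal_mult2[OF Iid] by blast
  define W where "W = {i. (mon (var i) :: ('n, 'k) mpoly) \<in> P}"
  have Fi: "\<exists>c\<in>A. Poly_Mapping.lookup b i < Poly_Mapping.lookup c i \<and> (\<forall>j. j \<noteq> i \<longrightarrow> Poly_Mapping.lookup c j \<le> Poly_Mapping.lookup b j)"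
    if i: "i \<in> W" and b: "b \<in> Poly_Mapping.keys f'" for i b
  proof -
    have "mon (var i) * f' \<in> MI A" using i colon_eq W_def by blast
    then have "f' * mon (var i) \<in> MS D" by (simp add: ID mult.commute)
    then have "b + var i \<in> D" using b keys_mult_mon[of f' "var i"] by (auto simp: MS_def)
    then obtain c where c: "c \<in> A" "dv c (b + var i)" unfolding D_def up_def by blast
    have "b \<notin> D" using b kf by blast
    then have "\<not> dv c b" using c(1) unfolding D_def up_def by blast
    then obtain j where j: "Poly_Mapping.lookup b j < Poly_Mapping.lookup c j" unfolding dv_def by (meson not_le)
    have o: "Poly_Mapping.lookup c k \<le> Poly_Mapping.lookup b k" if "k \<noteq> i" for k
      using c(2) that unfolding dv_def by (metis add_0_right lookup_add lookup_var)
    then have "j = i" using j by (meson not_le)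
    then show ?thesis using c(1) j o by blast
  qed
  have t: "trans A W"
    unfolding trans_def
  proof (intro conjI ballI)
    show "W \<subseteq> (\<Union>a\<in>A. Poly_Mapping.keys a)"
    proof
      fix i assume "i \<in> W"
      then obtain c where "c \<in> A" "Poly_Mapping.lookup b0 i < Poly_Mapping.lookup c i" using Fi b0 by blast
      then have "i \<in> Poly_Mapping.keys c" by (simp add: in_keys_iff)
      then show "i \<in> (\<Union>a\<in>A. Poly_Mapping.keys a)" using \<open>c \<in> A\<close> by blast
    qed
    fix a assume a: "a \<in> A"
    have "mon a \<in> P" using mon_in_MI[OF a] IP by blast
    then obtain i where i: "Poly_Mapping.lookup a i \<noteq> 0" "mon (var i) \<in> P" using prime_var[OF Pp] by blast
    have "W \<inter> Poly_Mapping.keys a = {i}"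
    proof (rule set_eqI, rule iffI)
      fix j assume j: "j \<in> W \<inter> Poly_Mapping.keys a"
      show "j \<in> {i}"
      proof (rule ccontr)
        assume ji: "j \<notin> {i}"
        have iW: "i \<in> W" using i W_def by blast
        obtain c where c: "c \<in> A" "Poly_Mapping.lookup b0 i < Poly_Mapping.lookup c i"
            "\<forall>k. k \<noteq> i \<longrightarrow> Poly_Mapping.lookup c k \<le> Poly_Mapping.lookup b0 k" using Fi[OF iW b0] by blast
        have "c = a" using disjD[OF dA c(1) a, of i] c(2) i(1) by (auto simp: in_keys_iff)
        obtain c' where c': "c' \<in> A" "Poly_Mapping.lookup b0 j < Poly_Mapping.lookup c' j"
          using Fi[OF _ b0, of j] j by blast
        have "c' = a" using disjD[OF dA c'(1) a, of j] c'(2) j by (auto simp: in_keys_iff)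
        show False using c(3) c'(2) ji \<open>c = a\<close> \<open>c' = a\<close> by (metis not_le singletonI)
      qed
    qed (use i W_def in \<open>auto simp: in_keys_iff\<close>)
    then show "\<exists>i. W \<inter> Poly_Mapping.keys a = {i}" by blast
  qed
  have QP: "Q W \<subseteq> P" by (rule Q_sub[OF prime_ideal_is[OF Pp]]) (simp add: W_def)
  have PQ: "P \<subseteq> Q W"
  proof
    fix g assume g: "g \<in> P"
    define E where "E = up (var ` W)"
    define g'' where "g'' = proj (- E) g"
    have pE: "proj E g \<in> Q W" by (simp add: Q_def MI_def MS_def keys_proj E_def)
    then have "proj E g \<in> P" using QP by blast
    moreover have "g'' = g - proj E g" using proj_split[of g E] unfolding g''_def by (metis add_diff_cancel_left')
    ultimately have "g'' \<in> P" using g ideal_diff[OF prime_ideal_is[OF Pp]] by metis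
    then have gf: "g'' * f' \<in> MS D" using colon_eq ID by blast
    have "g'' = 0"
    proof (rule ccontr)
      assume "g'' \<noteq> 0"
      then obtain a b where ab: "a \<in> Poly_Mapping.keys g''" "b \<in> Poly_Mapping.keys f'" "a + b \<in> Poly_Mapping.keys (g'' * f')"
        using K4 f'0 by blast
      then have "a + b \<in> D" using gf by (auto simp: MS_def)
      then obtain c where c: "c \<in> A" "dv c (a + b)" unfolding D_def up_def by blast
      have "b \<notin> D" using ab(2) kf by blast
      then have "\<not> dv c b" using c(1) unfolding D_def up_def by blast
      then obtain j where j: "Poly_Mapping.lookup b j < Poly_Mapping.lookup c j" unfolding dv_def by (meson not_le)
      obtain i where i: "W \<inter> Poly_Mapping.keys c = {i}" using t c(1) unfolding trans_def by blast
      then have iW: "i \<in> W" and ic: "i \<in> Poly_Mapping.keys c" by auto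
      obtain c' where c': "c' \<in> A" "Poly_Mapping.lookup b i < Poly_Mapping.lookup c' i"
          "\<forall>k. k \<noteq> i \<longrightarrow> Poly_Mapping.lookup c' k \<le> Poly_Mapping.lookup b k" using Fi[OF iW ab(2)] by blast
      have "c' = c" using disjD[OF dA c'(1) c(1) _ ic] c'(2) by (auto simp: in_keys_iff)
      have "a \<notin> E" using ab(1) unfolding g''_def keys_proj by blast
      then have ai: "Poly_Mapping.lookup a i = 0" using iW unfolding E_def up_var by blast
      have "Poly_Mapping.lookup c i \<le> Poly_Mapping.lookup a i + Poly_Mapping.lookup b i"
        using c(2) by (simp add: dv_def lookup_add)
      then show False
        using ai c'(2) c'(3) j \<open>c' = c\<close> by (metis add_0 not_le)
    qed
    then have "g = proj E g" using proj_split[of g E] unfolding g''_def by simp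
    then show "g \<in> Q W" using pE by simp
  qed
  show "P \<in> min_primes (MI A)" using QP PQ min_Q[OF t] by auto
qed



definition msr :: "('n::finite \<Rightarrow>\<^sub>0 nat) set \<Rightarrow> nat" where
  "msr A = (\<Sum>a\<in>A. deg a)"

locale stp =
  fixes A :: "('n::finite \<Rightarrow>\<^sub>0 nat) set" and a :: "'n \<Rightarrow>\<^sub>0 nat" and i :: 'n
  assumes CI: "CIset A" and aA: "a \<in> A" and ia: "i \<in> Poly_Mapping.keys a" and anv: "a \<noteq> var i"
begin

lemma fin: "finite A" and nz: "0 \<notin> A" and dA: "disj A" using CI by (auto simp: CIset_def)

lemma dvia: "dv (var i) a" using ia by (simp add: dv_var in_keys_iff)

lemma other: "c \<in> A \<Longrightarrow> c \<noteq> a \<Longrightarrow> Poly_Mapping.lookup c i = 0"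
  using disjD[OF dA _ aA _ ia] by (auto simp: in_keys_iff)

lemma amx: "a - var i \<noteq> 0"
proof
  assume h: "a - var i = 0"
  have "a = var i"
  proof (rule poly_mapping_eqI)
    fix k
    have "Poly_Mapping.lookup a k \<le> Poly_Mapping.lookup (var i) k"
      using arg_cong[OF h, of "\<lambda>p. Poly_Mapping.lookup p k"] by (simp add: lookup_minus)
    moreover have "Poly_Mapping.lookup (var i) k \<le> Poly_Mapping.lookup a k" using dvia by (simp add: dv_def)
    ultimately show "Poly_Mapping.lookup a k = Poly_Mapping.lookup (var i) k" by simp
  qed
  then show False using anv by simp
qed

lemma keys_amx: "Poly_Mapping.keys (a - var i) \<subseteq> Poly_Mapping.keys a"
  by (auto simp: in_keys_iff lookup_minus)

lemma notin_rest: "Poly_Mapping.keys z \<noteq> {} \<Longrightarrow> Poly_Mapping.keys z \<subseteq> Poly_Mapping.keys a \<Longrightarrow> z \<notin> A - {a}"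
  using dA aA unfolding disj_def by blast

lemma var_notin: "var i \<notin> A - {a}" by (rule notin_rest) (use ia in auto)
lemma amx_notin: "a - var i \<notin> A - {a}" by (rule notin_rest[OF _ keys_amx]) (use amx in simp)

definition "A1 = insert (var i) (A - {a})"
definition "A2 = insert (a - var i) (A - {a})"

lemma disj_rest: "c \<in> A - {a} \<Longrightarrow> Poly_Mapping.keys a \<inter> Poly_Mapping.keys c = {}"
  using dA aA unfolding disj_def by blast

lemma disj_ins: "Poly_Mapping.keys z \<subseteq> Poly_Mapping.keys a \<Longrightarrow> disj (insert z (A - {a}))"
  unfolding disj_def
proof (intro ballI impI)
  fix b c assume kz: "Poly_Mapping.keys z \<subseteq> Poly_Mapping.keys a"
    and b: "b \<in> insert z (A - {a})" and c: "c \<in> insert z (A - {a})" and bc: "b \<noteq> c"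
  show "Poly_Mapping.keys b \<inter> Poly_Mapping.keys c = {}"
  proof (cases "b = z")
    case True
    then have "c \<in> A - {a}" using c bc by auto
    then show ?thesis using disj_rest kz True by blast
  next
    case False
    then have b': "b \<in> A - {a}" using b by auto
    show ?thesis
    proof (cases "c = z")
      case True
      then show ?thesis using disj_rest[OF b'] kz by blast
    next
      case False
      then have "c \<in> A" using c by auto
      then show ?thesis using dA b' bc unfolding disj_def by blast
    qed
  qed
qed

lemma CI1: "CIset A1"
  unfolding CIset_def A1_def using fin nz disj_ins[of "var i"] ia by auto

lemma CI2: "CIset A2"
  unfolding CIset_def A2_def using fin nz disj_ins[OF keys_amx] amx by auto

lemma msr_lt: "msr A1 < msr A \<and> msr A2 < msr A"
proof -
  have m: "msr A = deg a + msr (A - {a})" unfolding msr_def using fin aA by (simp add: sum.remove)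
  have m1: "msr A1 = 1 + msr (A - {a})" unfolding msr_def A1_def using fin var_notin by simp
  have m2: "msr A2 = deg (a - var i) + msr (A - {a})" unfolding msr_def A2_def using fin amx_notin by simp
  have "deg a = deg (a - var i) + 1" using dv_decomp[OF dvia] deg_add deg_var by metis
  moreover have "deg (a - var i) \<noteq> 0" using amx deg_zero_iff by blast
  ultimately show ?thesis using m m1 m2 by simp
qed

lemma var_notin_MI: "(mon (var i) :: ('n, 'k::field) mpoly) \<notin> MI A"
proof
  assume "(mon (var i) :: ('n, 'k) mpoly) \<in> MI A"
  then obtain c where c: "c \<in> A" "dv c (var i)" by (auto simp: mon_MI up_def)
  show False
  proof (cases "c = a")
    case True
    then have "a = var i" using c(2) dvia by (intro poly_mapping_eqI) (simp add: dv_def le_antisym)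
    then show False using anv by simp
  next
    case False
    then have "Poly_Mapping.lookup c i = 0" using other c(1) by simp
    then have "c = 0" using c(2) by (intro poly_mapping_eqI) (auto simp: dv_def lookup_var le_zero_eq split: if_splits)
    then show False using c(1) nz by simp
  qed
qed

lemma sum_eq: "ideal_sum (MI A :: ('n, 'k::field) mpoly set) (principal (mon (var i))) = MI A1"
proof -
  have "ideal_sum (MI A :: ('n, 'k) mpoly set) (principal (mon (var i))) = MI (insert (var i) A)"
    using ideal_sum_gen[of "mon ` A" "mon (var i) :: ('n, 'k) mpoly"] gen_ideal_MI
    by (metis image_insert)
  moreover have "up (insert (var i) A) = up A1"
    unfolding A1_def up_def using dvia dv_trans by blast
  ultimately show ?thesis by (simp add: MI_def)
qed

lemma colon_eq: "colon (MI A :: ('n, 'k::field) mpoly set) (mon (var i)) = MI A2"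
proof -
  have pt: "b + var i \<in> up A \<longleftrightarrow> b \<in> up A2" for b
  proof
    assume "b + var i \<in> up A"
    then obtain c where c: "c \<in> A" "dv c (b + var i)" by (auto simp: up_def)
    have ck: "Poly_Mapping.lookup c k \<le> Poly_Mapping.lookup b k + Poly_Mapping.lookup (var i) k" for k
      using c(2) unfolding dv_def by (simp add: lookup_add)
    show "b \<in> up A2"
    proof (cases "c = a")
      case True
      have "dv (a - var i) b" unfolding dv_def
      proof
        fix k show "Poly_Mapping.lookup (a - var i) k \<le> Poly_Mapping.lookup b k"
          using ck[of k] True by (simp add: lookup_minus)
      qed
      then show ?thesis unfolding up_def A2_def by blast
    next
      case False
      have "dv c b" unfolding dv_def
      proof
        fix k show "Poly_Mapping.lookup c k \<le> Poly_Mapping.lookup b k"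
        proof (cases "k = i")
          case True then show ?thesis using other[OF c(1) False] by simp
        next
          case False then show ?thesis using ck[of k] by (simp add: lookup_var)
        qed
      qed
      moreover have "c \<in> A2" using c(1) False unfolding A2_def by blast
      ultimately show ?thesis unfolding up_def by blast
    qed
  next
    assume "b \<in> up A2"
    then obtain c where c: "c \<in> A2" "dv c b" by (auto simp: up_def)
    show "b + var i \<in> up A"
    proof (cases "c = a - var i")
      case True
      have "dv a (b + var i)" unfolding dv_def
      proof
        fix k
        have "Poly_Mapping.lookup a k - Poly_Mapping.lookup (var i) k \<le> Poly_Mapping.lookup b k"
          using c(2) True unfolding dv_def by (simp add: lookup_minus)
        then show "Poly_Mapping.lookup a k \<le> Poly_Mapping.lookup (b + var i) k"
          by (simp add: lookup_add)
      qed
      then show ?thesis using aA unfolding up_def by blast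
    next
      case False
      then have "c \<in> A" using c(1) unfolding A2_def by blast
      then show ?thesis using dv_add[OF c(2)] unfolding up_def by blast
    qed
  qed
  show ?thesis
  proof (rule set_eqI)
    fix f :: "('n, 'k) mpoly"
    have "f \<in> colon (MI A) (mon (var i)) \<longleftrightarrow> (\<forall>b\<in>Poly_Mapping.keys f. b + var i \<in> up A)"
      unfolding colon_def MI_def MS_def mem_Collect_eq keys_mult_mon by blast
    also have "\<dots> \<longleftrightarrow> f \<in> MI A2" using pt unfolding MI_def MS_def by blast
    finally show "f \<in> colon (MI A) (mon (var i)) \<longleftrightarrow> f \<in> MI A2" .
  qed
qed

lemma trans_up: "trans A1 V \<Longrightarrow> trans A V"
proof -
  assume t0: "trans A1 V"
  have t1: "V \<subseteq> (\<Union>c\<in>A1. Poly_Mapping.keys c)" using t0 unfolding trans_def by blast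
  have t2: "\<And>c. c \<in> A1 \<Longrightarrow> \<exists>j. V \<inter> Poly_Mapping.keys c = {j}" using t0 unfolding trans_def by blast
  have vA1: "var i \<in> A1" unfolding A1_def by simp
  have sub: "(\<Union>c\<in>A1. Poly_Mapping.keys c) \<subseteq> (\<Union>c\<in>A. Poly_Mapping.keys c)"
  proof
    fix k assume "k \<in> (\<Union>c\<in>A1. Poly_Mapping.keys c)"
    then obtain c where c: "c \<in> A1" "k \<in> Poly_Mapping.keys c" by blast
    show "k \<in> (\<Union>c\<in>A. Poly_Mapping.keys c)"
    proof (cases "c = var i")
      case True
      then have "k \<in> Poly_Mapping.keys a" using c(2) ia by simp
      then show ?thesis using aA by blast
    next
      case False
      then have "c \<in> A" using c(1) unfolding A1_def by blast
      then show ?thesis using c(2) by blast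
    qed
  qed
  have ex: "\<exists>j. V \<inter> Poly_Mapping.keys b = {j}" if b: "b \<in> A" for b
  proof (cases "b = a")
    case True
    obtain j where "V \<inter> Poly_Mapping.keys (var i) = {j}" using t2[OF vA1] by blast
    then have "j \<in> V \<inter> {i}" by (metis insertI1 keys_var)
    then have iV: "i \<in> V" by blast
    have "V \<inter> Poly_Mapping.keys a = {i}"
    proof (rule set_eqI, rule iffI)
      fix k assume k: "k \<in> V \<inter> Poly_Mapping.keys a"
      then obtain c where c: "c \<in> A1" "k \<in> Poly_Mapping.keys c" using t1 by blast
      show "k \<in> {i}"
      proof (cases "c = var i")
        case True then show ?thesis using c(2) by simp
      next
        case False
        then have "c \<in> A - {a}" using c(1) unfolding A1_def by blast
        then have "False" using disj_rest[of c] c(2) k by blast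
        then show ?thesis ..
      qed
    next
      fix k assume "k \<in> {i}"
      then show "k \<in> V \<inter> Poly_Mapping.keys a" using iV ia by simp
    qed
    then show ?thesis using True by blast
  next
    case False
    then have "b \<in> A1" using b unfolding A1_def by blast
    then show ?thesis using t2 by blast
  qed
  show "trans A V" unfolding trans_def using t1 sub ex by blast
qed

lemma minprimes_sub: "min_primes (MI A1 :: ('n, 'k::field) mpoly set) \<subseteq> min_primes (MI A)"
proof
  fix P :: "('n, 'k) mpoly set" assume "P \<in> min_primes (MI A1)"
  moreover have "disj A1" using CI1 by (simp add: CIset_def)
  ultimately obtain V where V: "trans A1 V" "P = Q V" using min_char by blast
  show "P \<in> min_primes (MI A)" unfolding V(2) by (rule min_Q[OF trans_up[OF V(1)]])
qed

end

lemma monomial_MI: "monomial_ideal (MI A :: ('n::finite, 'k::field) mpoly set)"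
proof -
  have "mon ` A \<subseteq> (monomials :: ('n, 'k) mpoly set)" by (auto simp: monomials_def mon_def)
  then show ?thesis unfolding monomial_ideal_def using gen_ideal_MI[of A, where 'k='k] by metis
qed



lemma CI_clean: "CIset A \<Longrightarrow> k_clean 0 (MI A :: ('n::finite, 'k::field) mpoly set)"
proof (induction "msr A" arbitrary: A rule: less_induct)
  case less
  have nz: "0 \<notin> A" and dA: "disj A" using less.prems by (auto simp: CIset_def)
  show ?case
  proof (cases "A \<subseteq> range var")
    case True
    show ?thesis by (rule k_clean.prime[OF monomial_MI MI_not_UNIV[OF nz] prime_MI_vars[OF True]])
  next
    case False
    then obtain a where aA: "a \<in> A" and anv: "a \<notin> range var" by blast
    then have "a \<noteq> 0" using nz by blast
    then obtain i where ia: "i \<in> Poly_Mapping.keys a" by (metis all_not_in_conv keys_eq_empty)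
    interpret s: stp A a i using less.prems aA ia anv by unfold_locales auto
    have cl: "cleaner_monomial (MI A :: ('n, 'k) mpoly set) (mon (var i))"
      unfolding cleaner_monomial_def
    proof (intro conjI)
      show "(mon (var i) :: ('n, 'k) mpoly) \<in> monomials" by (simp add: monomials_def mon_def)
      show "(mon (var i) :: ('n, 'k) mpoly) \<noteq> 1" using mon_inj[of "var i" 0] mon_one by (metis var_nz)
      show "(mon (var i) :: ('n, 'k) mpoly) \<notin> MI A" by (rule s.var_notin_MI)
      show "min_primes (ideal_sum (MI A :: ('n, 'k) mpoly set) (principal (mon (var i)))) \<subseteq> min_primes (MI A)"
        unfolding s.sum_eq by (rule s.minprimes_sub)
    qed
    have card: "card (mon_supp (mon (var i) :: ('n, 'k) mpoly)) \<le> 0 + 1"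
      by (simp add: mon_supp_def)
    have h1: "k_clean 0 (colon (MI A :: ('n, 'k) mpoly set) (mon (var i)))"
    proof -
      have "k_clean 0 (MI s.A2 :: ('n, 'k) mpoly set)" using less.hyps[of s.A2] s.msr_lt s.CI2 by blast
      then show ?thesis using s.colon_eq[where 'k='k] by metis
    qed
    have h2: "k_clean 0 (ideal_sum (MI A :: ('n, 'k) mpoly set) (principal (mon (var i))))"
    proof -
      have "k_clean 0 (MI s.A1 :: ('n, 'k) mpoly set)" using less.hyps[of s.A1] s.msr_lt s.CI1 by blast
      then show ?thesis using s.sum_eq[where 'k='k] by metis
    qed
    show ?thesis
      by (rule k_clean.step[OF monomial_MI MI_not_UNIV[OF nz] no_emb[OF dA] cl card h1 h2])
  qed
qed



lemma mon_dvd: "(mon c :: ('n::finite, 'k::field) mpoly) dvd mon b \<longleftrightarrow> dv c b"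
proof
  assume "(mon c :: ('n, 'k) mpoly) dvd mon b"
  then obtain h :: "('n, 'k) mpoly" where h: "mon b = mon c * h" by (auto elim: dvdE)
  then have "Poly_Mapping.keys (mon b :: ('n, 'k) mpoly) = Poly_Mapping.keys (h * mon c)" by (simp add: mult.commute)
  then have "{b} = (\<lambda>x. x + c) ` Poly_Mapping.keys h" by (simp add: keys_mult_mon)
  then obtain k where "b = k + c" by (metis imageE insertI1)
  then show "dv c b" using dv_add2[OF dv_refl] by simp
next
  assume "dv c b"
  then have "mon b = mon (b - c) * (mon c :: ('n, 'k) mpoly)" using dv_decomp mon_mult by metis
  then show "(mon c :: ('n, 'k) mpoly) dvd mon b" by (metis dvd_triv_right)
qed

lemma dv_deg_less: "dv c b \<Longrightarrow> c \<noteq> b \<Longrightarrow> deg c < deg (b :: 'n::finite \<Rightarrow>\<^sub>0 nat)"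
proof -
  assume d: "dv c b" "c \<noteq> b"
  have e: "b = (b - c) + c" by (rule dv_decomp[OF d(1)])
  have "b - c \<noteq> 0" using e d(2) by (metis add_0)
  then have "deg (b - c) \<noteq> 0" using deg_zero_iff by blast
  then show ?thesis using e deg_add by (metis add.commute less_add_same_cancel1 not_gr_zero)
qed

definition Amin :: "('n::finite \<Rightarrow>\<^sub>0 nat) set \<Rightarrow> ('n \<Rightarrow>\<^sub>0 nat) set" where
  "Amin B = {b \<in> up B. \<forall>c\<in>up B. dv c b \<longrightarrow> c = b}"

lemma below_min: "b \<in> up B \<Longrightarrow> \<exists>m\<in>Amin B. dv m b"
proof (induction "deg b" arbitrary: b rule: less_induct)
  case less
  show ?case
  proof (cases "b \<in> Amin B")
    case True then show ?thesis using dv_refl by blast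
  next
    case False
    then obtain c where c: "c \<in> up B" "dv c b" "c \<noteq> b" using less.prems unfolding Amin_def by blast
    then obtain m where "m \<in> Amin B" "dv m c" using less.hyps[of c] dv_deg_less by blast
    then show ?thesis using c(2) dv_trans by blast
  qed
qed

lemma up_Amin: "up (Amin B) = up B"
proof
  show "up (Amin B) \<subseteq> up B" unfolding up_def Amin_def using dv_trans by blast
  show "up B \<subseteq> up (Amin B)" using below_min unfolding up_def by blast
qed

lemma min_gens_Amin: "min_mon_gens (MI B :: ('n::finite, 'k::field) mpoly set) = mon ` Amin B"
proof (rule set_eqI)
  fix u :: "('n, 'k) mpoly"
  have mono: "monomials = range (mon :: _ \<Rightarrow> ('n, 'k) mpoly)" by (simp add: monomials_def mon_def[abs_def])
  show "u \<in> min_mon_gens (MI B) \<longleftrightarrow> u \<in> mon ` Amin B"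
  proof
    assume "u \<in> min_mon_gens (MI B)"
    then have u: "u \<in> MI B" "u \<in> monomials" "\<forall>v\<in>MI B \<inter> monomials. v dvd u \<longrightarrow> v = u"
      unfolding min_mon_gens_def by auto
    obtain b where b: "u = mon b" using u(2) unfolding mono by blast
    have "b \<in> Amin B" unfolding Amin_def
    proof (intro CollectI conjI ballI impI)
      show "b \<in> up B" using u(1) b mon_MI by blast
      fix c assume "c \<in> up B" "dv c b"
      then have "(mon c :: ('n, 'k) mpoly) \<in> MI B \<inter> monomials" "(mon c :: ('n, 'k) mpoly) dvd u"
        using mon_MI[of c B, where 'k='k] mono mon_dvd[of c b, where 'k='k] b by auto
      then have "(mon c :: ('n, 'k) mpoly) = mon b" using u(3) b by blast
      then show "c = b" using mon_inj by blast
    qed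
    then show "u \<in> mon ` Amin B" using b by blast
  next
    assume "u \<in> mon ` Amin B"
    then obtain b where b: "u = mon b" "b \<in> Amin B" by blast
    show "u \<in> min_mon_gens (MI B)" unfolding min_mon_gens_def
    proof (intro CollectI conjI ballI impI)
      show "u \<in> MI B \<inter> monomials" using b mon_MI mono unfolding Amin_def by auto
      fix v assume v: "v \<in> MI B \<inter> monomials" "v dvd u"
      obtain c where c: "v = mon c" using v(1) unfolding mono by blast
      then have "c \<in> up B" "dv c b" using v mon_MI[of c B, where 'k='k] mon_dvd[of c b, where 'k='k] b(1) by auto
      then show "v = u" using b c unfolding Amin_def by blast
    qed
  qed
qed

lemma disj_from_regular:
  fixes fs :: "('n::finite, 'k::field) mpoly list"
  assumes reg: "regular_sequence fs" and sf: "set fs = mon ` Amin B"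
    and a: "a \<in> Amin B" and b: "b \<in> Amin B" and ia: "i \<in> Poly_Mapping.keys a" and ib: "i \<in> Poly_Mapping.keys b"
    and p: "p < q" "q < length fs" and fp: "fs ! p = mon a" and fq: "fs ! q = mon b"
  shows False
proof -
  define T where "T = set (take q fs)"
  define A0 where "A0 = {d \<in> Amin B. mon d \<in> T}"
  have TA: "T \<subseteq> mon ` Amin B" unfolding T_def using sf set_take_subset by metis
  have TA0: "T = mon ` A0" unfolding A0_def using TA by blast
  have gT: "gen_ideal T = MI A0" using TA0 gen_ideal_MI by metis
  have "fs ! p \<in> T" unfolding T_def using p by (metis in_set_conv_nth length_take min.absorb4 min_less_iff_conj nth_take)
  then have aA0: "a \<in> A0" unfolding A0_def using fp a by simp
  define c where "c = a - b"
  have dvc: "dv a (c + b)" unfolding dv_def c_def by (auto simp: lookup_add lookup_minus)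
  have "mon c * fs ! q = mon (c + b)" using fq mon_mult by metis
  also have "\<dots> \<in> gen_ideal T" unfolding gT mon_MI up_def using aA0 dvc by blast
  finally have "mon c \<in> gen_ideal (set (take q fs))" using reg p unfolding regular_sequence_def T_def by blast
  then have "c \<in> up A0" unfolding T_def[symmetric] gT mon_MI .
  then obtain d where d: "d \<in> A0" "dv d c" unfolding up_def by blast
  have "dv c a" unfolding dv_def c_def by (simp add: lookup_minus)
  then have "dv d a" using d(2) dv_trans by blast
  moreover have "d \<in> up B" using d(1) unfolding A0_def Amin_def by blast
  ultimately have "d = a" using a unfolding Amin_def by blast
  then have "Poly_Mapping.lookup a i \<le> Poly_Mapping.lookup a i - Poly_Mapping.lookup b i"
    using d(2) unfolding dv_def c_def by (simp add: lookup_minus)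
  then show False using ia ib by (simp add: in_keys_iff)
qed

theorem theorem5p2:
  fixes I :: "('n::finite, 'k::field) mpoly set"
  assumes "monomial_ideal I"
    and "I \<noteq> UNIV"
    and "I \<noteq> {0}"
    and "complete_intersection I"
  shows "k_clean 0 I"
proof -
  obtain G where G: "G \<subseteq> monomials" "I = gen_ideal G" using assms(1) unfolding monomial_ideal_def by blast
  define B where "B = {a. (mon a :: ('n, 'k) mpoly) \<in> G}"
  have "G = mon ` B" unfolding B_def using G(1) by (auto simp: monomials_def mon_def)
  then have IB: "I = MI B" using G(2) gen_ideal_MI by metis
  define A where "A = Amin B"
  have IA: "I = MI A" unfolding IB A_def MI_def up_Amin ..
  obtain fs where fs: "distinct fs" "set fs = min_mon_gens I" "regular_sequence fs"
    using assms(4) unfolding complete_intersection_def by blast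
  have sf: "set fs = mon ` A" using fs(2) IB min_gens_Amin A_def by metis
  have fin: "finite A"
  proof -
    have "finite (mon ` A :: ('n, 'k) mpoly set)" using sf by (metis List.finite_set)
    moreover have "inj_on (mon :: _ \<Rightarrow> ('n, 'k) mpoly) A" using mon_inj by (metis inj_onI)
    ultimately show ?thesis using finite_imageD by blast
  qed
  have ne: "A \<noteq> {}"
  proof
    assume "A = {}"
    then have "I = MS {}" using IA by (simp add: MI_def up_def)
    then have "I = {0}" by (auto simp: MS_def)
    then show False using assms(3) by simp
  qed
  have nz: "0 \<notin> A"
  proof
    assume "0 \<in> A"
    then have "(mon 0 :: ('n, 'k) mpoly) \<in> I" using IA mon_in_MI by blast
    then have "I = UNIV" using ideal_one MI_ideal IA mon_one by metis
    then show False using assms(2) by simp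
  qed
  have dj: "disj A" unfolding disj_def
  proof (intro ballI impI)
    fix a b assume a: "a \<in> A" and b: "b \<in> A" and ab: "a \<noteq> b"
    show "Poly_Mapping.keys a \<inter> Poly_Mapping.keys b = {}"
    proof (rule ccontr)
      assume "Poly_Mapping.keys a \<inter> Poly_Mapping.keys b \<noteq> {}"
      then obtain i where ia: "i \<in> Poly_Mapping.keys a" and ib: "i \<in> Poly_Mapping.keys b" by blast
      have "mon a \<in> set fs" "mon b \<in> set fs" using sf a b by auto
      then obtain p q where pq: "p < length fs" "fs ! p = mon a" "q < length fs" "fs ! q = mon b"
        by (metis in_set_conv_nth)
      have "p \<noteq> q" using pq ab mon_inj by metis
      then show False
      proof (cases "p < q")
        case True
        show False by (rule disj_from_regular[OF fs(3) sf[unfolded A_def] a[unfolded A_def] b[unfolded A_def] ia ib True pq(3) pq(2) pq(4)])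
      next
        case False
        then have "q < p" using \<open>p \<noteq> q\<close> by simp
        show False by (rule disj_from_regular[OF fs(3) sf[unfolded A_def] b[unfolded A_def] a[unfolded A_def] ib ia \<open>q < p\<close> pq(1) pq(4) pq(2)])
      qed
    qed
  qed
  have "CIset A" unfolding CIset_def using fin ne nz dj by blast
  then show ?thesis using CI_clean IA by metis
qed

end
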